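(* Let $K$ be a commutative field whose characteristic is not equal to two, and let $G=T(2,K)$ be the group of invertible upper triangular matrices $\begin{bmatrix}\alpha & t\\ 0&\beta\end{bmatrix}$ with $\alpha,\beta\in K^*$, $t\in K$. Then for every real Banach space $E$, Jensen's functional equation $f(xy)+f(xy^{-1})=2f(x)$ is stable for the pair $(G;E)$: for every function $f\colon G\to E$ for which there is $c>0$ with $\|f(xy)+f(xy^{-1})-2f(x)\|\le c$ for all $x,y\in G$, there exists $j\colon G\to E$ with $j(xy)+j(xy^{-1})=2j(x)$ for all $x,y\in G$ such that $j-f$ is bounded on $G$.
   Context: $K^*$ denotes the multiplicative group of nonzero elements of $K$. *)

theory Defs
  imports "HOL-Analysis.Analysis"
begin

text \<open>The group T(2,K) of invertible upper triangular 2x2 matrices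
  [[a, t], [0, b]] over a field K, represented by triples (a, t, b)
  with a, b nonzero.  Multiplication and inversion are matrix
  multiplication and matrix inversion written out componentwise.\<close>

definition T2 :: "('k::field \<times> 'k \<times> 'k) set" where
  "T2 = {(a, t, b). a \<noteq> 0 \<and> b \<noteq> 0}"

fun T2_mult :: "'k::field \<times> 'k \<times> 'k \<Rightarrow> 'k \<times> 'k \<times> 'k \<Rightarrow> 'k \<times> 'k \<times> 'k" where
  "T2_mult (a, t, b) (a', t', b') = (a * a', a * t' + t * b', b * b')"

fun T2_inv :: "'k::field \<times> 'k \<times> 'k \<Rightarrow> 'k \<times> 'k \<times> 'k" where
  "T2_inv (a, t, b) = (inverse a, - t / (a * b), inverse b)"

end

theory Submission imports Defs begin



lemma n6:
  fixes w1 :: "'e::real_normed_vector"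
  shows "norm (w1 + w2 - w3 - u1 - u2 + 2 *\<^sub>R w4) \<le> norm w1 + norm w2 + norm w3 + norm u1 + norm u2 + 2 * norm w4"
proof -
  have "norm (w1 + w2 - w3 - u1 - u2 + 2 *\<^sub>R w4) \<le> norm (w1 + w2 - w3 - u1 - u2) + norm (2 *\<^sub>R w4)" by (rule norm_triangle_ineq)
  moreover have "norm (w1 + w2 - w3 - u1 - u2) \<le> norm (w1 + w2 - w3 - u1) + norm u2" by (rule norm_triangle_ineq4)
  moreover have "norm (w1 + w2 - w3 - u1) \<le> norm (w1 + w2 - w3) + norm u1" by (rule norm_triangle_ineq4)
  moreover have "norm (w1 + w2 - w3) \<le> norm (w1 + w2) + norm w3" by (rule norm_triangle_ineq4)
  moreover have "norm (w1 + w2) \<le> norm w1 + norm w2" by (rule norm_triangle_ineq)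
  ultimately show ?thesis by simp
qed
lemma n3:
  fixes w1 :: "'e::real_normed_vector"
  shows "norm (w1 + w2 - w3) \<le> norm w1 + norm w2 + norm w3"
  by (metis add_le_cancel_right norm_triangle_ineq norm_triangle_ineq4 order_trans)

lemma conv_lemma:
  fixes X :: "nat \<Rightarrow> 'e::banach"
  assumes st: "\<And>n. norm (X (Suc n) - X n) \<le> \<delta> / 2^Suc n"
  shows "\<exists>L. X \<longlonglongrightarrow> L \<and> norm (L - X 0) \<le> \<delta>"
proof -
  define d where "d k = X (Suc k) - X k" for k
  have sg: "(\<lambda>k. \<delta> / 2^Suc k) sums \<delta>"
  proof -
    have "(\<lambda>k. (1/2::real)^k) sums (1 / (1 - 1/2))" by (rule geometric_sums) simp
    then have "(\<lambda>k. (\<delta>/2) * (1/2::real)^k) sums ((\<delta>/2) * (1 / (1 - 1/2)))" by (rule sums_mult)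
    then show ?thesis by (simp add: power_divide field_simps)
  qed
  have sn: "summable (\<lambda>k. norm (d k))"
    by (rule summable_comparison_test[OF _ sums_summable[OF sg]]) (use st in \<open>auto simp: d_def\<close>)
  then have sd: "summable d" by (rule summable_norm_cancel)
  have tel: "\<And>n. (\<Sum>k<n. d k) = X n - X 0" by (simp add: d_def sum_lessThan_telescope)
  have "(\<lambda>n. \<Sum>k<n. d k) \<longlonglongrightarrow> suminf d" using sd summable_LIMSEQ by blast
  then have "(\<lambda>n. X n - X 0) \<longlonglongrightarrow> suminf d" by (simp add: tel)
  then have "(\<lambda>n. (X n - X 0) + X 0) \<longlonglongrightarrow> suminf d + X 0" by (intro tendsto_add) auto
  then have lim: "X \<longlonglongrightarrow> X 0 + suminf d" by (simp add: add.commute)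
  have "norm (suminf d) \<le> (\<Sum>k. norm (d k))" by (rule summable_norm[OF sn])
  also have "\<dots> \<le> (\<Sum>k. \<delta> / 2^Suc k)"
    using sn sums_summable[OF sg] st by (intro suminf_le) (simp_all add: d_def)
  also have "\<dots> = \<delta>" using sg sums_unique by metis
  finally show ?thesis using lim by auto
qed

lemma hyers:
  fixes h :: "'k::field \<times> 'k \<Rightarrow> 'e::banach"
  assumes H: "\<And>a b a' b'. a\<noteq>0 \<Longrightarrow> b\<noteq>0 \<Longrightarrow> a'\<noteq>0 \<Longrightarrow> b'\<noteq>0 \<Longrightarrow>
     norm (h (a*a', b*b') - h (a,b) - h (a',b')) \<le> \<delta>"
  shows "\<exists>A. (\<forall>a b a' b'. a\<noteq>0 \<longrightarrow> b\<noteq>0 \<longrightarrow> a'\<noteq>0 \<longrightarrow> b'\<noteq>0 \<longrightarrow>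
            A (a*a', b*b') = A (a,b) + A (a',b'))
          \<and> (\<forall>a b. a\<noteq>0 \<longrightarrow> b\<noteq>0 \<longrightarrow> norm (A (a,b) - h (a,b)) \<le> \<delta>)"
proof -
  define X where "X a b n = (1/2^n) *\<^sub>R h (a^2^n, b^2^n)" for a b and n :: nat
  have step: "norm (X a b (Suc n) - X a b n) \<le> \<delta>/2^Suc n" if ab: "a\<noteq>0" "b\<noteq>0" for a b n
  proof -
    define p where "p = a^2^n"
    define q where "q = b^2^n"
    have pq: "p \<noteq> 0" "q \<noteq> 0" using ab by (auto simp: p_def q_def)
    have e1: "a^(2*2^n) = p*p" "b^(2*2^n) = q*q" by (simp_all add: p_def q_def power_add[symmetric] mult_2[symmetric])
    have "X a b (Suc n) - X a b n = (1/2^Suc n) *\<^sub>R (h (p*p, q*q) - h (p,q) - h (p,q))"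
      by (simp add: X_def e1 p_def[symmetric] q_def[symmetric] algebra_simps scaleR_2[symmetric])
    then have "norm (X a b (Suc n) - X a b n) = (1/2^Suc n) * norm (h (p*p, q*q) - h (p,q) - h (p,q))"
      by simp
    also have "\<dots> \<le> (1/2^Suc n) * \<delta>" using H[OF pq pq] by (intro mult_left_mono) auto
    finally show ?thesis by simp
  qed
  have ex: "\<exists>L. X a b \<longlonglongrightarrow> L \<and> norm (L - X a b 0) \<le> \<delta>" if "a\<noteq>0" "b\<noteq>0" for a b
    by (rule conv_lemma) (rule step[OF that])
  define A where "A p = lim (X (fst p) (snd p))" for p
  have AL: "X a b \<longlonglongrightarrow> A (a,b) \<and> norm (A (a,b) - h (a,b)) \<le> \<delta>" if nz0: "a\<noteq>0" "b\<noteq>0" for a b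
  proof -
    obtain L where L: "X a b \<longlonglongrightarrow> L" "norm (L - X a b 0) \<le> \<delta>" using ex[OF nz0] by blast
    have "A (a,b) = L" unfolding A_def using L(1) by (simp add: limI)
    then show ?thesis using L by (simp add: X_def)
  qed
  have add: "A (a*a', b*b') = A (a,b) + A (a',b')" if nz: "a\<noteq>0" "b\<noteq>0" "a'\<noteq>0" "b'\<noteq>0" for a b a' b'
  proof -
    have l1: "(\<lambda>n. X (a*a') (b*b') n - X a b n - X a' b' n) \<longlonglongrightarrow> A (a*a', b*b') - A (a,b) - A (a',b')"
      using AL nz by (intro tendsto_diff) auto
    have bnd: "norm (X (a*a') (b*b') n - X a b n - X a' b' n) \<le> \<delta> * (1/2)^n" for n
    proof -
      have "X (a*a') (b*b') n - X a b n - X a' b' n = (1/2^n) *\<^sub>R (h (a^2^n * a'^2^n, b^2^n*b'^2^n) - h (a^2^n,b^2^n) - h (a'^2^n, b'^2^n))"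
        by (simp add: X_def power_mult_distrib algebra_simps)
      then have "norm (X (a*a') (b*b') n - X a b n - X a' b' n) = (1/2^n) * norm (h (a^2^n * a'^2^n, b^2^n*b'^2^n) - h (a^2^n,b^2^n) - h (a'^2^n, b'^2^n))"
        by simp
      also have "\<dots> \<le> (1/2^n) * \<delta>" using nz by (intro mult_left_mono H) auto
      finally show ?thesis by (simp add: power_divide)
    qed
    have z: "(\<lambda>n. \<delta> * (1/2::real)^n) \<longlonglongrightarrow> 0"
      by (intro tendsto_mult_right_zero LIMSEQ_power_zero) auto
    have l2: "(\<lambda>n. X (a*a') (b*b') n - X a b n - X a' b' n) \<longlonglongrightarrow> 0"
      by (rule Lim_null_comparison[OF _ z]) (simp add: bnd)
    from LIMSEQ_unique[OF l1 l2] show ?thesis by (simp add: algebra_simps)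
  qed
  show ?thesis using add AL by blast
qed

theorem theorem3p14:
  fixes f :: "'k::field \<times> 'k \<times> 'k \<Rightarrow> 'e::banach" and c :: real
  assumes char_not_2: "(2::'k) \<noteq> 0"
    and c_pos: "c > 0"
    and approx: "\<forall>x\<in>T2. \<forall>y\<in>T2.
        norm (f (T2_mult x y) + f (T2_mult x (T2_inv y)) - 2 *\<^sub>R f x) \<le> c"
  shows "\<exists>j :: 'k \<times> 'k \<times> 'k \<Rightarrow> 'e.
           (\<forall>x\<in>T2. \<forall>y\<in>T2. j (T2_mult x y) + j (T2_mult x (T2_inv y)) = 2 *\<^sub>R j x)
         \<and> (\<exists>B. \<forall>x\<in>T2. norm (j x - f x) \<le> B)"
proof -
  have P: "norm (f p + f q - 2 *\<^sub>R f (a,t,b)) \<le> c"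
    if "a\<noteq>0" "b\<noteq>0" "a'\<noteq>0" "b'\<noteq>0" "p = (a*a', a*t' + t*b', b*b')"
       "q = (a*inverse a', a*(- t'/(a'*b')) + t*inverse b', b*inverse b')" for a t b a' t' b' p q
  proof -
    have "(a,t,b) \<in> T2" "(a',t',b') \<in> T2" using that by (auto simp: T2_def)
    with approx have "norm (f (T2_mult (a,t,b) (a',t',b')) + f (T2_mult (a,t,b) (T2_inv (a',t',b'))) - 2 *\<^sub>R f (a,t,b)) \<le> c"
      by blast
    then show ?thesis using that by simp
  qed
  define e :: "'k \<times> 'k \<times> 'k" where "e = (1,0,1)"
  have U: "norm (f (1,s,1) - f e) \<le> c" for s
  proof -
    have V1: "norm (f (-1,s,1) + f (-1,s,1) - 2 *\<^sub>R f e) \<le> c"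
      unfolding e_def by (rule P[where a=1 and t=0 and b=1 and a'="-1" and t'=s and b'=1]) auto
    have V2: "norm (f (-1,s,1) + f (-1,s,1) - 2 *\<^sub>R f (1,s,1)) \<le> c"
      by (rule P[where a=1 and t=s and b=1 and a'="-1" and t'=0 and b'=1]) auto
    have "2 *\<^sub>R (f (1,s,1) - f e) = (f (-1,s,1) + f (-1,s,1) - 2 *\<^sub>R f e) - (f (-1,s,1) + f (-1,s,1) - 2 *\<^sub>R f (1,s,1))"
      by (simp add: algebra_simps)
    then have "norm (2 *\<^sub>R (f (1,s,1) - f e)) \<le> 2*c"
      using norm_triangle_ineq4[of "f (-1,s,1) + f (-1,s,1) - 2 *\<^sub>R f e" "f (-1,s,1) + f (-1,s,1) - 2 *\<^sub>R f (1,s,1)"] V1 V2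
      by simp
    then show ?thesis by simp
  qed
  have D: "norm (f (a,t,b) - f (a,0,b)) \<le> 7/2*c" if nz: "a\<noteq>0" "b\<noteq>0" for a t b
  proof -
    define W1 where "W1 = f (1, t*inverse b, 1) + f (a*a, t*b, b*b) - 2 *\<^sub>R f (a,t,b)"
    define q2 where "q2 = (inverse a * inverse a, - t/(a*a*b), inverse b * inverse b)"
    define W2 where "W2 = f (1, inverse a * t, 1) + f q2 - 2 *\<^sub>R f (inverse a, 0, inverse b)"
    define W3 where "W3 = f (a*a, t*b, b*b) + f q2 - 2 *\<^sub>R f e"
    define W4 where "W4 = f (a,0,b) + f (inverse a, 0, inverse b) - 2 *\<^sub>R f e"
    define U1 where "U1 = f (1, t*inverse b, 1) - f e"
    define U2 where "U2 = f (1, inverse a * t, 1) - f e"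
    have w1: "norm W1 \<le> c" unfolding W1_def
      by (rule P[where a=a and t=t and b=b and a'="inverse a" and t'=0 and b'="inverse b"]) (use nz in auto)
    have w2: "norm W2 \<le> c" unfolding W2_def
      by (rule P[where a="inverse a" and t=0 and b="inverse b" and a'=a and t'=t and b'=b]) (use nz in \<open>simp_all add: q2_def divide_inverse inverse_mult_distrib mult_ac\<close>)
    have w3: "norm W3 \<le> c" unfolding W3_def e_def
      by (rule P[where a=1 and t=0 and b=1 and a'="a*a" and t'="t*b" and b'="b*b"]) (use nz in \<open>simp_all add: q2_def divide_inverse inverse_mult_distrib mult_ac\<close>)
    have w4: "norm W4 \<le> c" unfolding W4_def e_def
      by (rule P[where a=1 and t=0 and b=1 and a'=a and t'=0 and b'=b]) (use nz in \<open>auto\<close>)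
    have u1: "norm U1 \<le> c" unfolding U1_def by (rule U)
    have u2: "norm U2 \<le> c" unfolding U2_def by (rule U)
    have eq: "2 *\<^sub>R (f (a,0,b) - f (a,t,b)) = W1 + W2 - W3 - U1 - U2 + 2 *\<^sub>R W4"
      unfolding W1_def W2_def W3_def W4_def U1_def U2_def unfolding scaleR_2 by (simp add: algebra_simps)
    have "norm (W1 + W2 - W3 - U1 - U2 + 2 *\<^sub>R W4) \<le> norm W1 + norm W2 + norm W3 + norm U1 + norm U2 + 2 * norm W4"
      by (rule n6)
    also have "\<dots> \<le> 7*c" using w1 w2 w3 w4 u1 u2 by simp
    finally have "norm (2 *\<^sub>R (f (a,0,b) - f (a,t,b))) \<le> 7*c" using eq by simp
    then have "norm (f (a,0,b) - f (a,t,b)) \<le> 7/2*c" by simp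
    then show ?thesis by (simp add: norm_minus_commute)
  qed
  define h where "h p = f (fst p, 0, snd p) - f e" for p
  have Hh: "norm (h (a*a', b*b') - h (a,b) - h (a',b')) \<le> 3/2*c"
    if nz: "a\<noteq>0" "b\<noteq>0" "a'\<noteq>0" "b'\<noteq>0" for a b a' b'
  proof -
    define Z1 where "Z1 = f (a*a',0,b*b') + f (a*inverse a', 0, b*inverse b') - 2 *\<^sub>R f (a,0,b)"
    define Z2 where "Z2 = f (a*a',0,b*b') + f (a'*inverse a, 0, b'*inverse b) - 2 *\<^sub>R f (a',0,b')"
    define Z3 where "Z3 = f (a*inverse a', 0, b*inverse b') + f (a'*inverse a, 0, b'*inverse b) - 2 *\<^sub>R f e"
    have z1: "norm Z1 \<le> c" unfolding Z1_def by (rule P[where a=a and t=0 and b=b and a'=a' and t'=0 and b'=b']) (use nz in auto)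
    have z2: "norm Z2 \<le> c" unfolding Z2_def by (rule P[where a=a' and t=0 and b=b' and a'=a and t'=0 and b'=b]) (use nz in \<open>auto simp: mult.commute\<close>)
    have z3: "norm Z3 \<le> c" unfolding Z3_def e_def
      by (rule P[where a=1 and t=0 and b=1 and a'="a*inverse a'" and t'=0 and b'="b*inverse b'"]) (use nz in \<open>simp_all add: inverse_mult_distrib mult.commute\<close>)
    have eq: "2 *\<^sub>R (h (a*a', b*b') - h (a,b) - h (a',b')) = Z1 + Z2 - Z3"
      unfolding Z1_def Z2_def Z3_def h_def unfolding scaleR_2 by (simp add: algebra_simps)
    have "norm (Z1 + Z2 - Z3) \<le> 3*c"
      using z1 z2 z3 n3[of Z1 Z2 Z3] by linarith
    then have "norm (2 *\<^sub>R (h (a*a', b*b') - h (a,b) - h (a',b'))) \<le> 3*c" using eq by simp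
    then show ?thesis by simp
  qed
  have ex: "\<exists>A. (\<forall>a b a' b'. a\<noteq>0 \<longrightarrow> b\<noteq>0 \<longrightarrow> a'\<noteq>0 \<longrightarrow> b'\<noteq>0 \<longrightarrow>
            A (a*a', b*b') = A (a,b) + A (a',b'))
          \<and> (\<forall>a b. a\<noteq>0 \<longrightarrow> b\<noteq>0 \<longrightarrow> norm (A (a,b) - h (a,b)) \<le> 3/2*c)"
    by (rule hyers) (rule Hh)
  then obtain A where AA: "(\<forall>a b a' b'. a\<noteq>0 \<longrightarrow> b\<noteq>0 \<longrightarrow> a'\<noteq>0 \<longrightarrow> b'\<noteq>0 \<longrightarrow>
            A (a*a', b*b') = A (a,b) + A (a',b'))
          \<and> (\<forall>a b. a\<noteq>0 \<longrightarrow> b\<noteq>0 \<longrightarrow> norm (A (a,b) - h (a,b)) \<le> 3/2*c)"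
    by (rule exE)
  have Aadd: "A (a*a', b*b') = A (a,b) + A (a',b')" if "a\<noteq>0" "b\<noteq>0" "a'\<noteq>0" "b'\<noteq>0" for a b a' b'
    using AA that by simp
  have Ab: "norm (A (a,b) - h (a,b)) \<le> 3/2*c" if "a\<noteq>0" "b\<noteq>0" for a b
    using AA that by simp
  have A1: "A (1,1) = 0"
  proof -
    have "A (1*1,1*1) = A (1,1) + A (1,1)" by (rule Aadd) auto
    then have "A (1,1) = A (1,1) + A (1,1)" by (simp only: mult_1)
    then show ?thesis by (simp only: add_cancel_right_right)
  qed
  define j where "j x = A (fst x, snd (snd x)) + f e" for x :: "'k \<times> 'k \<times> 'k"
  have jensen: "j (T2_mult x y) + j (T2_mult x (T2_inv y)) = 2 *\<^sub>R j x" if "x\<in>T2" "y\<in>T2" for x y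
  proof -
    obtain a t b where x: "x = (a,t,b)" by (cases x) auto
    obtain a' t' b' where y: "y = (a',t',b')" by (cases y) auto
    have nz: "a\<noteq>0" "b\<noteq>0" "a'\<noteq>0" "b'\<noteq>0" using that x y by (auto simp: T2_def)
    have i: "A (a',b') + A (inverse a', inverse b') = 0"
    proof -
      have "A (a' * inverse a', b' * inverse b') = A (a',b') + A (inverse a', inverse b')"
        by (rule Aadd) (use nz in auto)
      then show ?thesis using nz A1 by simp
    qed
    have e1: "A (a*a', b*b') = A (a,b) + A (a',b')" by (rule Aadd) (use nz in auto)
    have e2: "A (a*inverse a', b*inverse b') = A (a,b) + A (inverse a', inverse b')" by (rule Aadd) (use nz in auto)
    have j1: "j (T2_mult x y) = A (a*a', b*b') + f e" by (simp add: x y j_def)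
    have j2: "j (T2_mult x (T2_inv y)) = A (a*inverse a', b*inverse b') + f e" by (simp add: x y j_def)
    have j3: "j x = A (a,b) + f e" by (simp add: x j_def)
    have "j (T2_mult x y) + j (T2_mult x (T2_inv y)) = (A (a,b) + f e) + (A (a,b) + f e) + (A (a',b') + A (inverse a', inverse b'))"
      unfolding j1 j2 e1 e2 by (simp only: add_ac)
    also have "\<dots> = 2 *\<^sub>R j x" unfolding i j3 scaleR_2 by simp
    finally show ?thesis .
  qed
  have bound: "norm (j x - f x) \<le> 3/2*c + 7/2*c" if "x\<in>T2" for x
  proof -
    obtain a t b where x: "x = (a,t,b)" by (cases x) auto
    have nz: "a\<noteq>0" "b\<noteq>0" using that x by (auto simp: T2_def)
    have "j x - f x = (A (a,b) - h (a,b)) + (f (a,0,b) - f (a,t,b))"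
      by (simp add: x j_def h_def)
    then have "norm (j x - f x) \<le> norm (A (a,b) - h (a,b)) + norm (f (a,0,b) - f (a,t,b))"
      by (simp add: norm_triangle_ineq)
    also have "\<dots> \<le> 3/2*c + 7/2*c" using Ab[OF nz] D[OF nz, of t] by (simp add: norm_minus_commute)
    finally show ?thesis .
  qed
  show ?thesis
  proof (intro exI[of _ j] conjI)
    show "\<forall>x\<in>T2. \<forall>y\<in>T2. j (T2_mult x y) + j (T2_mult x (T2_inv y)) = 2 *\<^sub>R j x"
      using jensen by blast
    show "\<exists>B. \<forall>x\<in>T2. norm (j x - f x) \<le> B"
      by (rule exI[of _ "3/2*c + 7/2*c"]) (use bound in blast)
  qed
qed

end
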